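(* Let $\mathcal{B}=\langle V,F,E\rangle$ be a self-contained finite bipartite graph. Then the output of Algorithm 1 applied to $\mathcal{B}$ with no exogenous vertices ($W=\emptyset$) is unique, i.e. all runs of the algorithm (for all possible choices of minimal self-contained sets) produce the same directed cluster graph.
   Context: $\mathrm{adj}_{\mathcal{B}}(X)$ is the set of vertices adjacent to some vertex of $X$. A set $F'\subseteq F$ is self-contained if $|F'|=|\mathrm{adj}_{\mathcal{B}}(F')|$ and $|F''|\le|\mathrm{adj}_{\mathcal{B}}(F'')|$ for all $F''\subseteq F'$; $\mathcal{B}$ is self-contained if $|F|=|V|$ and $F$ is self-contained; a non-empty self-contained set is minimal self-contained if no non-empty strict subset is self-contained. A directed cluster graph is a pair $\langle\mathcal{V},\mathcal{E}\rangle$ with $\mathcal{V}$ a partition of a vertex set and $\mathcal{E}$ a set of edges $x\to C$ from vertices to clusters. Algorithm 1 (here with $W=\emptyset$): initialize $\mathcal{E}=\emptyset$, $\mathcal{V}=\emptyset$, $\mathcal{B}'=\langle V',F',E'\rangle=\mathcal{B}$. While $\mathcal{B}'$ is not the null graph: choose a minimal self-contained set $S_F\subseteq F'$ of $\mathcal{B}'$; let $C=S_F\cup\mathrm{adj}_{\mathcal{B}'}(S_F)$; add $C$ to $\mathcal{V}$; for each $v\in\mathrm{adj}_{\mathcal{B}}(S_F)\setminus\mathrm{adj}_{\mathcal{B}'}(S_F)$ add $v\to C$ to $\mathcal{E}$; replace $\mathcal{B}'$ by its subgraph induced by $(V'\cup F')\setminus C$. Output $\langle\mathcal{V},\mathcal{E}\rangle$.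 *)

theory Defs
  imports Main
begin

definition bipartite_graph :: "'a set \<Rightarrow> 'a set \<Rightarrow> ('a \<times> 'a) set \<Rightarrow> bool" where
  "bipartite_graph V F E \<longleftrightarrow> finite V \<and> finite F \<and> V \<inter> F = {} \<and> E \<subseteq> V \<times> F"

definition adj :: "('a \<times> 'a) set \<Rightarrow> 'a set \<Rightarrow> 'a set \<Rightarrow> 'a set" where
  "adj E Vs X = {v \<in> Vs. \<exists>f\<in>X. (v, f) \<in> E}"

definition self_contained_set :: "('a \<times> 'a) set \<Rightarrow> 'a set \<Rightarrow> 'a set \<Rightarrow> 'a set \<Rightarrow> bool" where
  "self_contained_set E Vs Fs S \<longleftrightarrow>
     S \<subseteq> Fs \<and> card S = card (adj E Vs S) \<and>
     (\<forall>S''. S'' \<subseteq> S \<longrightarrow> card S'' \<le> card (adj E Vs S''))"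

definition self_contained_graph :: "'a set \<Rightarrow> 'a set \<Rightarrow> ('a \<times> 'a) set \<Rightarrow> bool" where
  "self_contained_graph V F E \<longleftrightarrow> card F = card V \<and> self_contained_set E V F F"

definition minimal_self_contained :: "('a \<times> 'a) set \<Rightarrow> 'a set \<Rightarrow> 'a set \<Rightarrow> 'a set \<Rightarrow> bool" where
  "minimal_self_contained E Vs Fs S \<longleftrightarrow>
     S \<noteq> {} \<and> self_contained_set E Vs Fs S \<and>
     (\<forall>S'. S' \<subset> S \<and> S' \<noteq> {} \<longrightarrow> \<not> self_contained_set E Vs Fs S')"

text \<open>A state is \<open>(V', F', \<V>, \<E>)\<close>: the current subgraph \<open>\<B>'\<close> is the subgraph of \<open>\<B>\<close>
  induced by \<open>V' \<union> F'\<close> (its edges are \<open>E \<inter> V' \<times> F'\<close>), and \<open>(\<V>, \<E>)\<close> is the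
  directed cluster graph built so far.  \<open>alg1_run V F E st out\<close> means that some
  run of the algorithm from state st terminates with output out.\<close>
inductive alg1_run :: "'a set \<Rightarrow> 'a set \<Rightarrow> ('a \<times> 'a) set \<Rightarrow>
    'a set \<times> 'a set \<times> 'a set set \<times> ('a \<times> 'a set) set \<Rightarrow>
    'a set set \<times> ('a \<times> 'a set) set \<Rightarrow> bool"
  for V F :: "'a set" and E :: "('a \<times> 'a) set" where
  finish: "V' \<union> F' = {} \<Longrightarrow> alg1_run V F E (V', F', Cs, Es) (Cs, Es)"
| step: "V' \<union> F' \<noteq> {} \<Longrightarrow>
         minimal_self_contained (E \<inter> V' \<times> F') V' F' S \<Longrightarrow>
         C = S \<union> adj (E \<inter> V' \<times> F') V' S \<Longrightarrow>
         alg1_run V F E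
           (V' - C, F' - C, insert C Cs,
            Es \<union> {(v, C) | v. v \<in> adj E V S - adj (E \<inter> V' \<times> F') V' S}) out \<Longrightarrow>
         alg1_run V F E (V', F', Cs, Es) out"

end

theory Submission
  imports Defs
begin

definition hinv :: "('a \<times> 'a) set \<Rightarrow> 'a set \<Rightarrow> 'a set \<Rightarrow> bool" where
  "hinv E V' F' \<longleftrightarrow> finite V' \<and> finite F' \<and> V' \<inter> F' = {} \<and> card F' = card V' \<and>
     (\<forall>T. T \<subseteq> F' \<longrightarrow> card T \<le> card (adj E V' T))"

lemma adj_restr: "X \<subseteq> F' \<Longrightarrow> adj (E \<inter> V' \<times> F') V' X = adj E V' X"
  by (auto simp: adj_def)

lemma adj_Un: "adj E Vs (A \<union> B) = adj E Vs A \<union> adj E Vs B"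
  by (auto simp: adj_def)

lemma adj_sub: "adj E Vs X \<subseteq> Vs"
  by (auto simp: adj_def)

lemma adj_mono: "A \<subseteq> B \<Longrightarrow> adj E Vs A \<subseteq> adj E Vs B"
  by (auto simp: adj_def)

lemma adj_diff: "adj E (Vs - C) X = adj E Vs X - C"
  by (auto simp: adj_def)

lemma adj_empty[simp]: "adj E Vs {} = {}"
  by (auto simp: adj_def)

lemma msc_iff:
  assumes "hinv E V' F'"
  shows "minimal_self_contained (E \<inter> V' \<times> F') V' F' S \<longleftrightarrow>
     S \<noteq> {} \<and> S \<subseteq> F' \<and> card S = card (adj E V' S) \<and>
     (\<forall>S'. S' \<subset> S \<and> S' \<noteq> {} \<longrightarrow> card S' \<noteq> card (adj E V' S'))"
proof -
  have sc: "self_contained_set (E \<inter> V' \<times> F') V' F' X \<longleftrightarrow> X \<subseteq> F' \<and> card X = card (adj E V' X)" for X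
  proof
    assume "self_contained_set (E \<inter> V' \<times> F') V' F' X"
    then show "X \<subseteq> F' \<and> card X = card (adj E V' X)"
      unfolding self_contained_set_def using adj_restr by metis
  next
    assume h: "X \<subseteq> F' \<and> card X = card (adj E V' X)"
    have "\<forall>S''. S'' \<subseteq> X \<longrightarrow> card S'' \<le> card (adj (E \<inter> V' \<times> F') V' S'')"
      using h assms unfolding hinv_def by (metis adj_restr order_trans)
    then show "self_contained_set (E \<inter> V' \<times> F') V' F' X"
      using h adj_restr unfolding self_contained_set_def by metis
  qed
  show ?thesis unfolding minimal_self_contained_def sc by blast
qed

lemma disj:
  assumes inv: "hinv E V' F'"
    and m1: "minimal_self_contained (E \<inter> V' \<times> F') V' F' A"
    and m2: "minimal_self_contained (E \<inter> V' \<times> F') V' F' B"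
    and ne: "A \<noteq> B"
  shows "A \<inter> B = {} \<and> adj E V' A \<inter> adj E V' B = {}"
proof -
  note a = m1[unfolded msc_iff[OF inv]] and b = m2[unfolded msc_iff[OF inv]]
  have fV: "finite V'" and fF: "finite F'" using inv by (auto simp: hinv_def)
  have hall: "\<And>T. T \<subseteq> F' \<Longrightarrow> card T \<le> card (adj E V' T)" using inv by (auto simp: hinv_def)
  have fA: "finite A" "finite B" using a b finite_subset[OF _ fF] by meson+
  have fa: "finite (adj E V' A)" "finite (adj E V' B)" "finite (adj E V' (A \<inter> B))"
    using finite_subset[OF adj_sub fV] by blast+
  have h1: "card (A \<union> B) \<le> card (adj E V' A \<union> adj E V' B)"
    using hall[of "A \<union> B"] a b adj_Un[of E V' A B] by simp
  have h2: "card (adj E V' A \<union> adj E V' B) + card (adj E V' A \<inter> adj E V' B) = card (adj E V' A) + card (adj E V' B)"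
    using card_Un_Int[OF fa(1) fa(2)] by linarith
  have h3: "card (A \<union> B) + card (A \<inter> B) = card A + card B"
    using card_Un_Int[OF fA(1) fA(2)] by linarith
  have h4: "card (A \<inter> B) \<le> card (adj E V' (A \<inter> B))" using hall[of "A \<inter> B"] a by blast
  have sub: "adj E V' (A \<inter> B) \<subseteq> adj E V' A \<inter> adj E V' B" using adj_mono[of "A \<inter> B" A E V'] adj_mono[of "A \<inter> B" B E V'] by blast
  have h5: "card (adj E V' (A \<inter> B)) \<le> card (adj E V' A \<inter> adj E V' B)"
    using card_mono[OF _ sub] fa(1) by blast
  have e1: "card (A \<inter> B) = card (adj E V' (A \<inter> B))"
    and e2: "card (adj E V' (A \<inter> B)) = card (adj E V' A \<inter> adj E V' B)"
    using h1 h2 h3 h4 h5 a b by linarith+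
  have e3: "adj E V' (A \<inter> B) = adj E V' A \<inter> adj E V' B"
    using card_subset_eq[OF _ sub e2] fa(1) by blast
  have "A \<inter> B = {}"
  proof (rule ccontr)
    assume nz: "A \<inter> B \<noteq> {}"
    have "\<not> (A \<inter> B \<subset> A)" using a nz e1 by blast
    moreover have "\<not> (A \<inter> B \<subset> B)" using b nz e1 by blast
    ultimately show False using ne by blast
  qed
  then show ?thesis using e3 by simp
qed

lemma step_inv:
  assumes inv: "hinv E V' F'"
    and m: "minimal_self_contained (E \<inter> V' \<times> F') V' F' S"
    and C: "C = S \<union> adj E V' S"
  shows "hinv E (V' - C) (F' - C)"
proof -
  note a = m[unfolded msc_iff[OF inv]]
  have fV: "finite V'" and fF: "finite F'" and dj: "V' \<inter> F' = {}" and cd: "card F' = card V'"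
    using inv by (auto simp: hinv_def)
  have hall: "\<And>T. T \<subseteq> F' \<Longrightarrow> card T \<le> card (adj E V' T)" using inv by (auto simp: hinv_def)
  have as: "adj E V' S \<subseteq> V'" by (rule adj_sub)
  have FC: "F' - C = F' - S" using C as dj by blast
  have VC: "V' - C = V' - adj E V' S" using C a dj by blast
  have fS: "finite S" using a finite_subset[OF _ fF] by meson
  have fa: "finite (adj E V' S)" using finite_subset[OF as fV] .
  have c1: "card (F' - C) = card (V' - C)"
    using FC VC card_Diff_subset[OF fS] card_Diff_subset[OF fa] a as cd by simp
  have c2: "card T \<le> card (adj E (V' - C) T)" if T: "T \<subseteq> F' - C" for T
  proof -
    have fT: "finite T" using T finite_subset[OF _ fF] by blast
    have fat: "finite (adj E V' T)" using finite_subset[OF adj_sub fV] by blast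
    have TS: "T \<union> S \<subseteq> F'" using T a by blast
    have "card (T \<union> S) \<le> card (adj E V' (T \<union> S))" using hall[OF TS] .
    also have "adj E V' (T \<union> S) = (adj E V' T - adj E V' S) \<union> adj E V' S"
      using adj_Un[of E V' T S] by blast
    also have "card \<dots> = card (adj E V' T - adj E V' S) + card (adj E V' S)"
      by (rule card_Un_disjoint) (use fat fa in auto)
    finally have "card (T \<union> S) \<le> card (adj E V' T - adj E V' S) + card (adj E V' S)" .
    moreover have "card (T \<union> S) = card T + card S"
      by (rule card_Un_disjoint) (use fT fS T FC in auto)
    moreover have "adj E (V' - C) T = adj E V' T - adj E V' S"
    proof -
      have SF: "S \<subseteq> F'" using a by blast
      have "adj E V' T - C = adj E V' T - adj E V' S"
        using C SF dj adj_sub[of E V' T] by blast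
      then show ?thesis using adj_diff[of E V' C T] by simp
    qed
    moreover have "card S = card (adj E V' S)" using a by blast
    ultimately show ?thesis by simp
  qed
  have "finite (V' - C)" "finite (F' - C)" "(V' - C) \<inter> (F' - C) = {}" using fV fF dj by auto
  then show ?thesis unfolding hinv_def using c1 c2 by blast
qed

lemma exists_run:
  "hinv E V' F' \<Longrightarrow> \<exists>r. alg1_run V F E (V', F', Cs, Es) r"
proof (induction "card F'" arbitrary: V' F' Cs Es rule: less_induct)
  case less
  note inv = less.prems
  have fV: "finite V'" and fF: "finite F'" and cd: "card F' = card V'"
    using inv by (auto simp: hinv_def)
  show ?case
  proof (cases "V' \<union> F' = {}")
    case True
    show ?thesis by (rule exI, rule alg1_run.finish[OF True])
  next
    case False
    have Fne: "F' \<noteq> {}"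
    proof
      assume "F' = {}"
      then have "V' = {}" using cd fV by simp
      then show False using False \<open>F' = {}\<close> by simp
    qed
    let ?P = "\<lambda>S. S \<noteq> {} \<and> S \<subseteq> F' \<and> card S = card (adj E V' S)"
    have "card F' \<le> card (adj E V' F')" using inv unfolding hinv_def by blast
    moreover have "card (adj E V' F') \<le> card V'" using card_mono[OF fV adj_sub] .
    ultimately have "?P F'" using Fne cd by simp
    then obtain S where S0: "?P S \<and> (\<forall>y. ?P y \<longrightarrow> card S \<le> card y)"
      using ex_has_least_nat[of ?P F' card] by blast
    then have S: "?P S" and Smin: "\<And>y. ?P y \<Longrightarrow> card S \<le> card y" by blast+
    have fS: "finite S" using S finite_subset[OF _ fF] by meson
    have m: "minimal_self_contained (E \<inter> V' \<times> F') V' F' S"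
      unfolding msc_iff[OF inv]
    proof (intro conjI allI impI)
      fix S' assume h: "S' \<subset> S \<and> S' \<noteq> {}"
      then have "card S' < card S" using psubset_card_mono fS by blast
      show "card S' \<noteq> card (adj E V' S')"
      proof
        assume "card S' = card (adj E V' S')"
        then have "?P S'" using h S by blast
        then have "card S \<le> card S'" by (rule Smin)
        then show False using \<open>card S' < card S\<close> by linarith
      qed
    qed (use S in auto)
    define C where "C = S \<union> adj (E \<inter> V' \<times> F') V' S"
    have C': "C = S \<union> adj E V' S" using C_def adj_restr[of S F' E V'] S by simp
    have inv2: "hinv E (V' - C) (F' - C)" using step_inv[OF inv m C'] .
    have "card (F' - C) < card F'"
    proof -
      obtain x where "x \<in> S" using S by blast
      then have "F' - C \<subset> F'" using S C' by auto
      then show ?thesis using fF psubset_card_mono by blast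
    qed
    then obtain r where "alg1_run V F E (V' - C, F' - C, insert C Cs,
            Es \<union> {(v, C) | v. v \<in> adj E V S - adj (E \<inter> V' \<times> F') V' S}) r"
      using less.hyps inv2 by blast
    then show ?thesis using alg1_run.step[OF False m C_def] by blast
  qed
qed

definition nxt :: "'a set \<Rightarrow> ('a \<times> 'a) set \<Rightarrow> 'a set \<Rightarrow> 'a set \<Rightarrow> 'a set set \<Rightarrow> ('a \<times> 'a set) set \<Rightarrow> 'a set
    \<Rightarrow> 'a set \<times> 'a set \<times> 'a set set \<times> ('a \<times> 'a set) set" where
  "nxt V E V' F' Cs Es S = (V' - (S \<union> adj E V' S), F' - (S \<union> adj E V' S), insert (S \<union> adj E V' S) Cs,
     Es \<union> {(v, S \<union> adj E V' S) | v. v \<in> adj E V S - adj E V' S})"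

lemma msc_sub: "minimal_self_contained E' V' F' S \<Longrightarrow> S \<subseteq> F'"
  by (simp add: minimal_self_contained_def self_contained_set_def)

lemma run_step:
  assumes "V' \<union> F' \<noteq> {}" "minimal_self_contained (E \<inter> V' \<times> F') V' F' S"
    "alg1_run V F E (nxt V E V' F' Cs Es S) r"
  shows "alg1_run V F E (V', F', Cs, Es) r"
proof -
  have SF: "S \<subseteq> F'" using msc_sub[OF assms(2)] .
  have e: "adj (E \<inter> V' \<times> F') V' S = adj E V' S" using adj_restr[OF SF] .
  show ?thesis
    using alg1_run.step[OF assms(1) assms(2) refl] assms(3) unfolding nxt_def e .
qed

lemma run_fin: "alg1_run V F E (V', F', Cs, Es) r \<Longrightarrow> V' \<union> F' = {} \<Longrightarrow> r = (Cs, Es)"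
  by (erule alg1_run.cases) auto

lemma run_inv: "alg1_run V F E (V', F', Cs, Es) r \<Longrightarrow> V' \<union> F' \<noteq> {} \<Longrightarrow>
  \<exists>S. minimal_self_contained (E \<inter> V' \<times> F') V' F' S \<and> alg1_run V F E (nxt V E V' F' Cs Es S) r"
proof (erule alg1_run.cases)
  fix V'' F'' Cs' Es' assume "(V', F', Cs, Es) = (V'', F'', Cs', Es')" "r = (Cs', Es')" "V'' \<union> F'' = {}"
    "V' \<union> F' \<noteq> {}"
  then show ?thesis by simp
next
  fix V'' F'' S C Cs' Es' out
  assume h: "(V', F', Cs, Es) = (V'', F'', Cs', Es')" "r = out"
    "minimal_self_contained (E \<inter> V'' \<times> F'') V'' F'' S"
    "C = S \<union> adj (E \<inter> V'' \<times> F'') V'' S"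
    "alg1_run V F E (V'' - C, F'' - C, insert C Cs',
      Es' \<union> {(v, C) |v. v \<in> adj E V S - adj (E \<inter> V'' \<times> F'') V'' S}) out"
  have SF: "S \<subseteq> F'" using msc_sub[OF h(3)] h(1) by simp
  have e: "adj (E \<inter> V' \<times> F') V' S = adj E V' S" using adj_restr[OF SF] .
  have "alg1_run V F E (nxt V E V' F' Cs Es S) r"
    using h(5) h(1,2,4) e unfolding nxt_def by simp
  then show ?thesis using h(1,3) by auto
qed

lemma adj_keep:
  assumes inv: "hinv E V' F'"
    and m1: "minimal_self_contained (E \<inter> V' \<times> F') V' F' S1"
    and m2: "minimal_self_contained (E \<inter> V' \<times> F') V' F' S2"
    and ne: "S1 \<noteq> S2" and X: "X \<subseteq> S2"
  shows "adj E (V' - (S1 \<union> adj E V' S1)) X = adj E V' X"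
proof -
  have d: "S1 \<inter> S2 = {}" "adj E V' S1 \<inter> adj E V' S2 = {}" using disj[OF inv m1 m2 ne] by blast+
  have dj: "V' \<inter> F' = {}" using inv by (simp add: hinv_def)
  have S1F: "S1 \<subseteq> F'" using msc_sub[OF m1] .
  have "adj E V' X \<subseteq> adj E V' S2" using adj_mono[OF X] .
  moreover have "adj E V' X \<subseteq> V'" by (rule adj_sub)
  ultimately have "adj E V' X - (S1 \<union> adj E V' S1) = adj E V' X" using d(2) S1F dj by blast
  then show ?thesis using adj_diff[of E V' "S1 \<union> adj E V' S1" X] by simp
qed

lemma swap_msc:
  assumes inv: "hinv E V' F'"
    and m1: "minimal_self_contained (E \<inter> V' \<times> F') V' F' S1"
    and m2: "minimal_self_contained (E \<inter> V' \<times> F') V' F' S2"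
    and ne: "S1 \<noteq> S2"
  shows "minimal_self_contained (E \<inter> (V' - (S1 \<union> adj E V' S1)) \<times> (F' - (S1 \<union> adj E V' S1)))
           (V' - (S1 \<union> adj E V' S1)) (F' - (S1 \<union> adj E V' S1)) S2"
proof -
  have inv1: "hinv E (V' - (S1 \<union> adj E V' S1)) (F' - (S1 \<union> adj E V' S1))"
    using step_inv[OF inv m1 refl] .
  have d: "S1 \<inter> S2 = {}" "adj E V' S1 \<inter> adj E V' S2 = {}" using disj[OF inv m1 m2 ne] by blast+
  have dj: "V' \<inter> F' = {}" using inv by (simp add: hinv_def)
  have S2F: "S2 \<subseteq> F'" using msc_sub[OF m2] .
  have sub: "S2 \<subseteq> F' - (S1 \<union> adj E V' S1)" using d(1) S2F dj adj_sub[of E V' S1] by blast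
  have k: "\<And>X. X \<subseteq> S2 \<Longrightarrow> adj E (V' - (S1 \<union> adj E V' S1)) X = adj E V' X"
    using adj_keep[OF inv m1 m2 ne] .
  note b = m2[unfolded msc_iff[OF inv]]
  show ?thesis unfolding msc_iff[OF inv1]
  proof (intro conjI allI impI)
    show "S2 \<noteq> {}" using b by blast
    show "S2 \<subseteq> F' - (S1 \<union> adj E V' S1)" using sub .
    show "card S2 = card (adj E (V' - (S1 \<union> adj E V' S1)) S2)" using b k[of S2] by simp
    fix S' assume h: "S' \<subset> S2 \<and> S' \<noteq> {}"
    then have "card S' \<noteq> card (adj E V' S')" using b by blast
    then show "card S' \<noteq> card (adj E (V' - (S1 \<union> adj E V' S1)) S')" using k[of S'] h by auto
  qed
qed

lemma swap_eq:
  assumes inv: "hinv E V' F'"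
    and m1: "minimal_self_contained (E \<inter> V' \<times> F') V' F' S1"
    and m2: "minimal_self_contained (E \<inter> V' \<times> F') V' F' S2"
    and ne: "S1 \<noteq> S2"
  shows "nxt V E (V' - (S1 \<union> adj E V' S1)) (F' - (S1 \<union> adj E V' S1)) (insert (S1 \<union> adj E V' S1) Cs)
     (Es \<union> {(v, S1 \<union> adj E V' S1) | v. v \<in> adj E V S1 - adj E V' S1}) S2
   = nxt V E (V' - (S2 \<union> adj E V' S2)) (F' - (S2 \<union> adj E V' S2)) (insert (S2 \<union> adj E V' S2) Cs)
     (Es \<union> {(v, S2 \<union> adj E V' S2) | v. v \<in> adj E V S2 - adj E V' S2}) S1"
proof -
  have k1: "adj E (V' - (S1 \<union> adj E V' S1)) S2 = adj E V' S2"
    using adj_keep[OF inv m1 m2 ne] by blast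
  have k2: "adj E (V' - (S2 \<union> adj E V' S2)) S1 = adj E V' S1"
    using adj_keep[OF inv m2 m1 ne[symmetric]] by blast
  show ?thesis unfolding nxt_def k1 k2
    by (simp add: Diff_eq Int_ac insert_commute Un_ac)
qed

lemma unique:
  "hinv E V' F' \<Longrightarrow> alg1_run V F E (V', F', Cs, Es) o1 \<Longrightarrow> alg1_run V F E (V', F', Cs, Es) o2 \<Longrightarrow> o1 = o2"
proof (induction "card F'" arbitrary: V' F' Cs Es o1 o2 rule: less_induct)
  case less
  note inv = less.prems(1)
  have fF: "finite F'" using inv by (simp add: hinv_def)
  show ?case
  proof (cases "V' \<union> F' = {}")
    case True
    then show ?thesis using run_fin[OF less.prems(2)] run_fin[OF less.prems(3)] by simp
  next
    case False
    obtain S1 where m1: "minimal_self_contained (E \<inter> V' \<times> F') V' F' S1"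
      and r1: "alg1_run V F E (nxt V E V' F' Cs Es S1) o1"
      using run_inv[OF less.prems(2) False] by blast
    obtain S2 where m2: "minimal_self_contained (E \<inter> V' \<times> F') V' F' S2"
      and r2: "alg1_run V F E (nxt V E V' F' Cs Es S2) o2"
      using run_inv[OF less.prems(3) False] by blast
    have dec: "card (F' - (S \<union> adj E V' S)) < card F'"
      if m: "minimal_self_contained (E \<inter> V' \<times> F') V' F' S" for S
    proof -
      have "S \<noteq> {}" using m by (simp add: minimal_self_contained_def)
      moreover have "S \<subseteq> F'" using msc_sub[OF m] .
      ultimately have "F' - (S \<union> adj E V' S) \<subset> F'" by blast
      then show ?thesis using fF psubset_card_mono by blast
    qed
    define C1 where "C1 = S1 \<union> adj E V' S1"
    define C2 where "C2 = S2 \<union> adj E V' S2"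
    have inv1: "hinv E (V' - C1) (F' - C1)" using step_inv[OF inv m1 C1_def] .
    have inv2: "hinv E (V' - C2) (F' - C2)" using step_inv[OF inv m2 C2_def] .
    define X1 where "X1 = Es \<union> {(v, C1) | v. v \<in> adj E V S1 - adj E V' S1}"
    define X2 where "X2 = Es \<union> {(v, C2) | v. v \<in> adj E V S2 - adj E V' S2}"
    have n1: "nxt V E V' F' Cs Es S1 = (V' - C1, F' - C1, insert C1 Cs, X1)"
      unfolding nxt_def C1_def X1_def by simp
    have n2: "nxt V E V' F' Cs Es S2 = (V' - C2, F' - C2, insert C2 Cs, X2)"
      unfolding nxt_def C2_def X2_def by simp
    have dec1: "card (F' - C1) < card F'" using dec[OF m1] unfolding C1_def .
    have dec2: "card (F' - C2) < card F'" using dec[OF m2] unfolding C2_def .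
    have r1': "alg1_run V F E (V' - C1, F' - C1, insert C1 Cs, X1) o1" using r1 n1 by simp
    have r2': "alg1_run V F E (V' - C2, F' - C2, insert C2 Cs, X2) o2" using r2 n2 by simp
    show ?thesis
    proof (cases "S1 = S2")
      case True
      then have "C1 = C2" "X1 = X2" unfolding C1_def C2_def X1_def X2_def by simp_all
      then have r2'': "alg1_run V F E (V' - C1, F' - C1, insert C1 Cs, X1) o2" using r2' by simp
      show ?thesis using less.hyps[OF dec1 inv1 r1' r2''] .
    next
      case ne: False
      have m12: "minimal_self_contained (E \<inter> (V' - C1) \<times> (F' - C1)) (V' - C1) (F' - C1) S2"
        using swap_msc[OF inv m1 m2 ne] unfolding C1_def .
      have m21: "minimal_self_contained (E \<inter> (V' - C2) \<times> (F' - C2)) (V' - C2) (F' - C2) S1"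
        using swap_msc[OF inv m2 m1 ne[symmetric]] unfolding C2_def .
      have "S2 \<noteq> {}" using m12 by (simp add: minimal_self_contained_def)
      then have ne1: "(V' - C1) \<union> (F' - C1) \<noteq> {}" using msc_sub[OF m12] by blast
      have "S1 \<noteq> {}" using m21 by (simp add: minimal_self_contained_def)
      then have ne2: "(V' - C2) \<union> (F' - C2) \<noteq> {}" using msc_sub[OF m21] by blast
      have sw: "nxt V E (V' - C1) (F' - C1) (insert C1 Cs) X1 S2 = nxt V E (V' - C2) (F' - C2) (insert C2 Cs) X2 S1"
        using swap_eq[OF inv m1 m2 ne, of V Cs Es] unfolding C1_def C2_def X1_def X2_def .
      obtain V3 F3 Cs3 Es3 where st: "nxt V E (V' - C1) (F' - C1) (insert C1 Cs) X1 S2 = (V3, F3, Cs3, Es3)"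
        by (metis prod_cases4)
      have inv3: "hinv E V3 F3"
        using step_inv[OF inv1 m12 refl] st unfolding nxt_def by simp
      obtain r where r: "alg1_run V F E (V3, F3, Cs3, Es3) r" using exists_run[OF inv3] by blast
      have ra: "alg1_run V F E (V' - C1, F' - C1, insert C1 Cs, X1) r"
        using run_step[OF ne1 m12] r st by simp
      have rb: "alg1_run V F E (V' - C2, F' - C2, insert C2 Cs, X2) r"
        using run_step[OF ne2 m21] r st sw by simp
      have "o1 = r" using less.hyps[OF dec1 inv1 r1' ra] .
      moreover have "o2 = r" using less.hyps[OF dec2 inv2 r2' rb] .
      ultimately show ?thesis by simp
    qed
  qed
qed

theorem lemma34:
  fixes V F :: "'a set" and E :: "('a \<times> 'a) set"
  assumes "bipartite_graph V F E"
    and "self_contained_graph V F E"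
    and "alg1_run V F E (V, F, {}, {}) out1"
    and "alg1_run V F E (V, F, {}, {}) out2"
  shows "out1 = out2"
proof -
  have "hinv E V F"
    using assms(1,2) unfolding hinv_def bipartite_graph_def self_contained_graph_def
      self_contained_set_def by auto
  then show ?thesis using unique assms(3,4) by blast
qed

end
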